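(* Let $L$ be an $n\times n$ nonsingular M-matrix with integer entries. Every equivalence class of $\mathbb{Z}^n$ under $\sim$ contains exactly one $z$-superstable configuration.
   Context: A Z-matrix is a square real matrix whose off-diagonal entries are all $\le 0$. A nonsingular M-matrix is a Z-matrix $L$ that is invertible with $L^{-1}$ having all entries nonnegative. Vector inequalities are entrywise. For $f,g\in\mathbb{Z}^n$, $f\sim g$ means $g-f=Lz$ for some $z\in\mathbb{Z}^n$. A vector $f\in\mathbb{Z}^n$ with $f\ge 0$ is $z$-superstable with respect to $L$ if for every $z\in\mathbb{Z}^n$ with $z\ge0$ and $z\ne0$ there exists $i$ with $f_i-(Lz)_i<0$. *)

theory Defs
  imports "HOL-Analysis.Analysis"
begin

text \<open>Integer n x n matrices are int^'n^'n, with 'n a finite index type (n = CARD('n)).\<close>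

definition real_mat :: "int^'n^'m \<Rightarrow> real^'n^'m" where
  "real_mat L = (\<chi> i j. real_of_int (L $ i $ j))"

definition Z_matrix :: "('a::{ord,zero})^'n^'n \<Rightarrow> bool" where
  "Z_matrix L \<longleftrightarrow> (\<forall>i j. i \<noteq> j \<longrightarrow> L $ i $ j \<le> 0)"

definition nonsingular_M_matrix :: "int^'n^'n \<Rightarrow> bool" where
  "nonsingular_M_matrix L \<longleftrightarrow> Z_matrix L \<and> invertible (real_mat L) \<and>
     (\<forall>i j. matrix_inv (real_mat L) $ i $ j \<ge> 0)"

definition lat_equiv :: "int^'n^'n \<Rightarrow> int^'n \<Rightarrow> int^'n \<Rightarrow> bool" where
  "lat_equiv L f g \<longleftrightarrow> (\<exists>z::int^'n. g - f = L *v z)"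

definition z_superstable :: "int^'n^'n \<Rightarrow> int^'n \<Rightarrow> bool" where
  "z_superstable L f \<longleftrightarrow> (\<forall>i. f $ i \<ge> 0) \<and>
     (\<forall>z::int^'n. (\<forall>i. z $ i \<ge> 0) \<and> z \<noteq> 0 \<longrightarrow> (\<exists>i. f $ i - (L *v z) $ i < 0))"

end

theory Submission
  imports Defs
begin

lemma mv_comp: "(A *v x) $ i = (\<Sum>j\<in>UNIV. A$i$j * x$j)"
  by (simp add: matrix_vector_mult_def)

lemma inv_props:
  fixes A :: "real^'n^'n"
  assumes "invertible A"
  shows "A ** matrix_inv A = mat 1 \<and> matrix_inv A ** A = mat 1"
  using assms unfolding invertible_def matrix_inv_def by (rule someI_ex)

lemma real_mv: "real_mat L *v (\<chi> j. real_of_int (z$j)) = (\<chi> i. real_of_int ((L *v z) $ i))"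
  by (simp add: vec_eq_iff mv_comp real_mat_def)

lemma zmat_nonpos:
  fixes L :: "int^'n^'n"
  assumes Z: "Z_matrix L" and v: "\<forall>j. v$j \<ge> 0" and vi: "v$i = 0"
  shows "(L *v v)$i \<le> 0"
  unfolding mv_comp
proof (rule sum_nonpos)
  fix j show "L$i$j * v$j \<le> 0"
  proof (cases "j = i")
    case True then show ?thesis using vi by simp
  next
    case False then have "L$i$j \<le> 0" using Z by (simp add: Z_matrix_def)
    then show ?thesis using v by (simp add: mult_nonpos_nonneg)
  qed
qed

lemma uniq:
  fixes L :: "int^'n^'n"
  assumes Z: "Z_matrix L" and sf: "z_superstable L f" and sf': "z_superstable L f'"
    and eq: "f' - f = L *v z"
  shows "f = f'"
proof -
  define p where "p = (\<chi> i. max (z$i) 0)"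
  define q where "q = (\<chi> i. max (- z$i) 0)"
  have zpq: "z = p - q" by (simp add: p_def q_def vec_eq_iff max_def)
  have p0: "\<forall>j. p$j \<ge> 0" and q0: "\<forall>j. q$j \<ge> 0" by (simp_all add: p_def q_def)
  have alt: "\<And>i. p$i = 0 \<or> q$i = 0" by (simp add: p_def q_def max_def)
  have f0: "\<forall>i. f$i \<ge> 0" and f0': "\<forall>i. f'$i \<ge> 0"
    using sf sf' by (simp_all add: z_superstable_def)
  have key: "\<And>i. f$i - (L *v q)$i = f'$i - (L *v p)$i"
  proof -
    fix i
    have "f' = f + L *v p - L *v q" using eq zpq
      by (simp add: matrix_vector_mult_diff_distrib algebra_simps)
    then have "f'$i = f$i + (L *v p)$i - (L *v q)$i" by simp
    then show "f$i - (L *v q)$i = f'$i - (L *v p)$i" by simp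
  qed
  have nn: "\<And>i. f$i - (L *v q)$i \<ge> 0"
  proof -
    fix i
    show "f$i - (L *v q)$i \<ge> 0"
    proof (cases "q$i = 0")
      case True then show ?thesis using zmat_nonpos[OF Z q0 True] f0 by (smt (verit))
    next
      case False then have "p$i = 0" using alt by blast
      then show ?thesis using zmat_nonpos[OF Z p0] f0' key[of i] by (smt (verit))
    qed
  qed
  have "q = 0"
  proof (rule ccontr)
    assume "q \<noteq> 0"
    then obtain i where "f$i - (L *v q)$i < 0" using sf q0 by (auto simp: z_superstable_def)
    with nn[of i] show False by simp
  qed
  moreover have "p = 0"
  proof (rule ccontr)
    assume "p \<noteq> 0"
    then obtain i where "f'$i - (L *v p)$i < 0" using sf' p0 by (auto simp: z_superstable_def)
    with nn[of i] key[of i] show False by simp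
  qed
  ultimately have "z = 0" using zpq by simp
  then show ?thesis using eq by simp
qed

lemma smult_mv: "(L::int^'n^'n) *v (k *s y) = k *s (L *v y)"
  by (simp add: vec_eq_iff mv_comp sum_distrib_left mult.left_commute)

lemma pos_vec:
  fixes L :: "int^'n^'n"
  assumes M: "nonsingular_M_matrix L"
  shows "\<exists>y. \<forall>i. (L *v y)$i \<ge> 1"
proof -
  define R where "R = real_mat L"
  define Ri where "Ri = matrix_inv R"
  have inv: "R ** Ri = mat 1" using M inv_props[of R] by (simp add: nonsingular_M_matrix_def R_def Ri_def)
  define x where "x = Ri *v vec 1"
  have Rx: "R *v x = vec 1" by (simp add: x_def matrix_vector_mul_assoc inv)
  define M where "M = (\<Sum>i\<in>UNIV. \<Sum>j\<in>UNIV. \<bar>R$i$j\<bar>)"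
  define c where "c = M + 1"
  define y where "y = (\<chi> j. ceiling (c * x$j))"
  have "(L *v y)$i \<ge> 1" for i
  proof -
    define e where "e j = real_of_int (y$j) - c * x$j" for j
    have e01: "0 \<le> e j \<and> e j \<le> 1" for j
      unfolding e_def y_def by simp linarith
    have "real_of_int ((L *v y)$i) = (\<Sum>j\<in>UNIV. R$i$j * real_of_int (y$j))"
      by (simp add: mv_comp R_def real_mat_def)
    also have "\<dots> = c * (\<Sum>j\<in>UNIV. R$i$j * x$j) + (\<Sum>j\<in>UNIV. R$i$j * e j)"
      by (simp add: e_def sum_distrib_left sum.distrib[symmetric] algebra_simps)
    also have "(\<Sum>j\<in>UNIV. R$i$j * x$j) = 1"
      using Rx by (simp add: vec_eq_iff mv_comp)
    also have "(\<Sum>j\<in>UNIV. R$i$j * e j) \<ge> (\<Sum>j\<in>UNIV. - \<bar>R$i$j\<bar>)"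
    proof (rule sum_mono)
      fix j
      have "\<bar>R$i$j * e j\<bar> \<le> \<bar>R$i$j\<bar>"
        using e01[of j] by (simp add: abs_mult mult_left_le)
      then show "- \<bar>R$i$j\<bar> \<le> R$i$j * e j" by linarith
    qed
    moreover have "(\<Sum>j\<in>UNIV. \<bar>R$i$j\<bar>) \<le> M"
      unfolding M_def by (rule member_le_sum[where f="\<lambda>i. \<Sum>j\<in>UNIV. \<bar>R$i$j\<bar>"]) (auto intro: sum_nonneg)
    ultimately have "real_of_int ((L *v y)$i) \<ge> 1"
      by (simp add: c_def sum_negf)
    then show ?thesis by simp
  qed
  then show ?thesis by blast
qed

lemma exist:
  fixes L :: "int^'n^'n"
  assumes Mm: "nonsingular_M_matrix L"
  shows "\<exists>f. lat_equiv L g f \<and> z_superstable L f"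
proof -
  obtain y where y: "\<forall>i. (L *v y)$i \<ge> 1" using pos_vec[OF Mm] by blast
  define k where "k = (\<Sum>i\<in>UNIV. \<bar>g$i\<bar>)"
  define f0 where "f0 = g + L *v (k *s y)"
  have f0nn: "f0$i \<ge> 0" for i
  proof -
    have "\<bar>g$i\<bar> \<le> k" unfolding k_def by (rule member_le_sum) auto
    moreover have "k \<ge> 0" unfolding k_def by (rule sum_nonneg) auto
    ultimately have "k * (L *v y)$i \<ge> k * 1" using y by (intro mult_left_mono) auto
    moreover have "f0$i = g$i + k * (L *v y)$i" by (simp add: f0_def smult_mv)
    ultimately show ?thesis using \<open>\<bar>g$i\<bar> \<le> k\<close> by linarith
  qed
  define R where "R = real_mat L"
  define Ri where "Ri = matrix_inv R"
  have inv: "Ri ** R = mat 1" using Mm inv_props[of R] by (simp add: nonsingular_M_matrix_def R_def Ri_def)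
  have Rinn: "Ri$i$j \<ge> 0" for i j using Mm by (simp add: nonsingular_M_matrix_def R_def Ri_def)
  define rv :: "int^'n \<Rightarrow> real^'n" where "rv v = (\<chi> j. real_of_int (v$j))" for v
  define B where "B = (\<Sum>i\<in>UNIV. (Ri *v rv f0)$i)"
  define S where "S = {z. (\<forall>i. z$i \<ge> 0) \<and> (\<forall>i. (f0 - L *v z)$i \<ge> 0)}"
  have bnd: "real_of_int (\<Sum>i\<in>UNIV. z$i) \<le> B" if zS: "z \<in> S" for z
  proof -
    have "rv z = Ri *v (R *v rv z)" by (simp add: matrix_vector_mul_assoc inv)
    also have "R *v rv z = rv (L *v z)" unfolding R_def rv_def by (rule real_mv)
    finally have zr: "rv z = Ri *v rv (L *v z)" .
    have "real_of_int (z$i) \<le> (Ri *v rv f0)$i" for i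
    proof -
      have "(Ri *v rv f0)$i - (Ri *v rv (L *v z))$i = (\<Sum>j\<in>UNIV. Ri$i$j * (rv f0 $ j - rv (L *v z) $ j))"
        by (simp add: mv_comp sum_subtractf right_diff_distrib)
      also have "\<dots> \<ge> 0"
      proof (rule sum_nonneg)
        fix j
        have "(f0 - L *v z)$j \<ge> 0" using zS by (simp add: S_def)
        then have "rv f0 $ j - rv (L *v z) $ j \<ge> 0" by (simp add: rv_def)
        then show "Ri$i$j * (rv f0 $ j - rv (L *v z) $ j) \<ge> 0" using Rinn by simp
      qed
      finally have "(Ri *v rv (L *v z))$i \<le> (Ri *v rv f0)$i" by simp
      moreover have "real_of_int (z$i) = (Ri *v rv (L *v z))$i" using zr
        by (metis rv_def vec_lambda_beta)
      ultimately show ?thesis by simp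
    qed
    then have "(\<Sum>i\<in>UNIV. real_of_int (z$i)) \<le> B" unfolding B_def by (rule sum_mono)
    then show ?thesis by simp
  qed
  define K where "K = {m::nat. \<exists>z\<in>S. (\<Sum>i\<in>UNIV. z$i) = int m}"
  have Kb: "m \<le> nat (ceiling B)" if mK: "m \<in> K" for m
  proof -
    obtain z where "z \<in> S" "(\<Sum>i\<in>UNIV. z$i) = int m" using mK unfolding K_def by auto
    with bnd have "real m \<le> B" by fastforce
    then show ?thesis by linarith
  qed
  have finK: "finite K" using Kb finite_nat_set_iff_bounded_le by blast
  have "0 \<in> S" using f0nn by (simp add: S_def)
  then have "0 \<in> K" unfolding K_def by force
  then have "Max K \<in> K" using finK Max_in by blast
  then obtain z where zS: "z \<in> S" and zs: "(\<Sum>i\<in>UNIV. z$i) = int (Max K)" unfolding K_def by blast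
  define f where "f = f0 - L *v z"
  have "lat_equiv L g f"
    unfolding lat_equiv_def f_def f0_def
    by (rule exI[of _ "k *s y - z"]) (simp add: matrix_vector_mult_diff_distrib)
  moreover have "z_superstable L f"
    unfolding z_superstable_def
  proof (intro conjI allI impI)
    fix i show "f$i \<ge> 0" using zS by (simp add: S_def f_def)
  next
    fix z' :: "int^'n"
    assume a: "(\<forall>i. z'$i \<ge> 0) \<and> z' \<noteq> 0"
    show "\<exists>i. f$i - (L *v z')$i < 0"
    proof (rule ccontr)
      assume "\<not> ?thesis"
      then have h: "\<forall>i. f$i - (L *v z')$i \<ge> 0" by (simp add: not_less)
      have "z + z' \<in> S" using h zS a
        by (simp add: S_def f_def matrix_vector_right_distrib algebra_simps)
      obtain i where "z'$i \<noteq> 0" using a by (metis vec_eq_iff zero_index)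
      then have "z'$i > 0" using a by (metis order_le_neq_trans)
      moreover have "z'$i \<le> (\<Sum>j\<in>UNIV. z'$j)" by (rule member_le_sum) (use a in auto)
      ultimately have pos: "(\<Sum>j\<in>UNIV. z'$j) > 0" by simp
      have "(\<Sum>j\<in>UNIV. (z + z')$j) = (\<Sum>j\<in>UNIV. z$j) + (\<Sum>j\<in>UNIV. z'$j)"
        by (simp add: sum.distrib)
      then have sumeq: "(\<Sum>j\<in>UNIV. (z + z')$j) = int (Max K) + (\<Sum>j\<in>UNIV. z'$j)" using zs by simp
      have "nat (\<Sum>j\<in>UNIV. (z + z')$j) \<in> K"
        unfolding K_def using \<open>z + z' \<in> S\<close> sumeq pos
        by (intro CollectI bexI[of _ "z + z'"]) auto
      have gt: "nat (\<Sum>j\<in>UNIV. (z + z')$j) > Max K" using sumeq pos by simp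
      from \<open>nat (\<Sum>j\<in>UNIV. (z + z')$j) \<in> K\<close>
      have "nat (\<Sum>j\<in>UNIV. (z + z')$j) \<le> Max K" using finK by simp
      with gt show False by simp
    qed
  qed
  ultimately show ?thesis by blast
qed

theorem mainTheorem6:
  fixes L :: "int^'n^'n"
  assumes "nonsingular_M_matrix L"
  shows "\<forall>g::int^'n. \<exists>!f. lat_equiv L g f \<and> z_superstable L f"
proof
  fix g :: "int^'n"
  obtain f where f: "lat_equiv L g f \<and> z_superstable L f" using exist[OF assms] by blast
  show "\<exists>!f. lat_equiv L g f \<and> z_superstable L f"
  proof (rule ex1I[of _ f])
    show "lat_equiv L g f \<and> z_superstable L f" by (rule f)
  next
    fix f' assume f': "lat_equiv L g f' \<and> z_superstable L f'"
    obtain z1 where z1: "f - g = L *v z1" using f by (auto simp: lat_equiv_def)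
    obtain z2 where z2: "f' - g = L *v z2" using f' by (auto simp: lat_equiv_def)
    have "f' - f = L *v (z2 - z1)" using z1 z2
      by (simp add: matrix_vector_mult_diff_distrib) (metis diff_diff_eq2 diff_add_cancel add_diff_cancel_left')
    have Z: "Z_matrix L" using assms by (simp add: nonsingular_M_matrix_def)
    show "f' = f" using uniq[OF Z _ _ \<open>f' - f = L *v (z2 - z1)\<close>] f f' by simp
  qed
qed

end
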